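(* Let $G$ be a cubical $\omega$-category with connections, $n\ge1$, and $1\le j\le n-1$. For an $n$-shell $z=(z^-_1,z^+_1,\dots,z^-_n,z^+_n)$ define $\psi_jz=w=(w^\alpha_i)$ by: $w^\alpha_i=\psi_{j-1}z^\alpha_i$ for $i<j$; $w^-_j=z^-_j\circ_jz^+_{j+1}$; $w^+_j=z^-_{j+1}\circ_jz^+_j$; $w^\alpha_{j+1}=\varepsilon_j\partial^\alpha_jz^\alpha_{j+1}$; $w^\alpha_i=\psi_jz^\alpha_i$ for $i>j+1$. Then all these composites are defined, $\psi_jz$ is again an $n$-shell, and $\psi_j\partial=\partial\psi_j:G_n\to\square G_{n-1}$, where $\partial x=(\partial^-_1x,\partial^+_1x,\dots,\partial^-_nx,\partial^+_nx)$.
   Context: A cubical $\omega$-category with connections $G$ consists of sets $G_n$ ($n\ge0$), face maps $\partial^\alpha_i:G_n\to G_{n-1}$, degeneracies $\varepsilon_i:G_{n-1}\to G_n$, connections $\Gamma^\alpha_i:G_n\to G_{n+1}$ ($1\le i\le n$, $\alpha=\pm$) and partial compositions $\circ_j$ on $G_n$ ($1\le j\le n$, $a\circ_jb$ defined iff $\partial^+_ja=\partial^-_jb$) satisfying: $\partial^\alpha_i\partial^\beta_j=\partial^\beta_{j-1}\partial^\alpha_i$ ($i<j$), $\varepsilon_i\varepsilon_j=\varepsilon_{j+1}\varepsilon_i$ ($i\le j$), $\partial^\alpha_i\varepsilon_j=\varepsilon_{j-1}\partial^\alpha_i$ ($i<j$), $\varepsilon_j\partial^\alpha_{i-1}$ ($i>j$),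 $\mathrm{id}$ ($i=j$); $\Gamma^\alpha_i\Gamma^\beta_j=\Gamma^\beta_{j+1}\Gamma^\alpha_i$ ($i<j$), $\Gamma^\alpha_i\Gamma^\alpha_i=\Gamma^\alpha_{i+1}\Gamma^\alpha_i$, $\Gamma^\alpha_i\varepsilon_j=\varepsilon_{j+1}\Gamma^\alpha_i$ ($i<j$), $\varepsilon_j\Gamma^\alpha_{i-1}$ ($i>j$), $\Gamma^\alpha_j\varepsilon_j=\varepsilon_{j+1}\varepsilon_j$, $\partial^\alpha_i\Gamma^\beta_j=\Gamma^\beta_{j-1}\partial^\alpha_i$ ($i<j$), $\Gamma^\beta_j\partial^\alpha_{i-1}$ ($i>j+1$), $\partial^\alpha_j\Gamma^\alpha_j=\partial^\alpha_{j+1}\Gamma^\alpha_j=\mathrm{id}$, $\partial^\alpha_j\Gamma^{-\alpha}_j=\partial^\alpha_{j+1}\Gamma^{-\alpha}_j=\varepsilon_j\partial^\alpha_j$; $\partial^-_j(a\circ_jb)=\partial^-_ja$, $\partial^+_j(a\circ_jb)=\partial^+_jb$, $\partial^\alpha_i(a\circ_jb)=\partial^\alpha_ia\circ_{j-1}\partial^\alpha_ib$ ($i<j$), $\partial^\alpha_ia\circ_j\partial^\alpha_ib$ ($i>j$); interchange $(a\circ_ib)\circ_j(c\circ_id)=(a\circ_jc)\circ_i(b\circ_jd)$ for $i\ne j$; $\varepsilon_i(a\circ_jb)=\varepsilon_ia\circ_{j+1}\varepsilon_ib$ ($i\le j$), $\varepsilon_ia\circ_j\varepsilon_ib$ ($i>j$);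 $\Gamma^\alpha_i(a\circ_jb)=\Gamma^\alpha_ia\circ_{j+1}\Gamma^\alpha_ib$ ($i<j$), $\Gamma^\alpha_ia\circ_j\Gamma^\alpha_ib$ ($i>j$); $\Gamma^+_j(a\circ_jb)=(\Gamma^+_ja\circ_j\varepsilon_ja)\circ_{j+1}(\varepsilon_{j+1}a\circ_j\Gamma^+_jb)$, $\Gamma^-_j(a\circ_jb)=(\Gamma^-_ja\circ_j\varepsilon_{j+1}b)\circ_{j+1}(\varepsilon_jb\circ_j\Gamma^-_jb)$; each $\circ_j$ is a category structure with identities $\varepsilon_jy$; $\Gamma^+_ix\circ_i\Gamma^-_ix=\varepsilon_{i+1}x$, $\Gamma^+_ix\circ_{i+1}\Gamma^-_ix=\varepsilon_ix$. Folding operation on $G_m$: $\psi_ix=\Gamma^+_i\partial^-_{i+1}x\circ_{i+1}x\circ_{i+1}\Gamma^-_i\partial^+_{i+1}x$ for $1\le i\le m-1$. An $n$-shell in $G$ is a $2n$-tuple $z=(z^-_1,z^+_1,\dots,z^-_n,z^+_n)$ of elements of $G_{n-1}$ with $\partial^\alpha_iz^\beta_j=\partial^\beta_{j-1}z^\alpha_i$ whenever $i<j$; the set of $n$-shells is $\square G_{n-1}$. *)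

theory Defs
  imports Main
begin

text \<open>Conventions (dimension-indexed, signs: True = +, False = -):
  \<^item> cell G m = G_m;
  \<^item> face G m i a x = \<partial>^a_i x for x in G_m (result in G_(m-1)), 1 \<le> i \<le> m;
  \<^item> degen G m i y = \<epsilon>_i y for y in G_(m-1) (result in G_m), 1 \<le> i \<le> m;
  \<^item> conn G m i a x = \<Gamma>^a_i x for x in G_m (result in G_(m+1)), 1 \<le> i \<le> m;
  \<^item> comp G m j a b = a \<circ>_j b in G_m, 1 \<le> j \<le> m (meaningful only when composable).\<close>

record 'a cubical_data =
  cell  :: "nat \<Rightarrow> 'a set"
  face  :: "nat \<Rightarrow> nat \<Rightarrow> bool \<Rightarrow> 'a \<Rightarrow> 'a"
  degen :: "nat \<Rightarrow> nat \<Rightarrow> 'a \<Rightarrow> 'a"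
  conn  :: "nat \<Rightarrow> nat \<Rightarrow> bool \<Rightarrow> 'a \<Rightarrow> 'a"
  comp  :: "nat \<Rightarrow> nat \<Rightarrow> 'a \<Rightarrow> 'a \<Rightarrow> 'a"

definition composable :: "'a cubical_data \<Rightarrow> nat \<Rightarrow> nat \<Rightarrow> 'a \<Rightarrow> 'a \<Rightarrow> bool" where
  "composable G m j a b \<longleftrightarrow> a \<in> cell G m \<and> b \<in> cell G m \<and> 1 \<le> j \<and> j \<le> m \<and>
     face G m j True a = face G m j False b"

definition cubical_omega_cat_conn :: "'a cubical_data \<Rightarrow> bool" where
  "cubical_omega_cat_conn G \<longleftrightarrow>
    \<comment> \<open>typing of the operations\<close>
    (\<forall>m i a x. x \<in> cell G (Suc m) \<and> 1 \<le> i \<and> i \<le> Suc m \<longrightarrow> face G (Suc m) i a x \<in> cell G m) \<and>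
    (\<forall>m i y. y \<in> cell G m \<and> 1 \<le> i \<and> i \<le> Suc m \<longrightarrow> degen G (Suc m) i y \<in> cell G (Suc m)) \<and>
    (\<forall>m i a x. x \<in> cell G m \<and> 1 \<le> i \<and> i \<le> m \<longrightarrow> conn G m i a x \<in> cell G (Suc m)) \<and>
    (\<forall>m j a b. composable G m j a b \<longrightarrow> comp G m j a b \<in> cell G m) \<and>
    \<comment> \<open>face/face\<close>
    (\<forall>m i j a b x. x \<in> cell G (Suc (Suc m)) \<and> 1 \<le> i \<and> i < j \<and> j \<le> Suc (Suc m) \<longrightarrow>
        face G (Suc m) i a (face G (Suc (Suc m)) j b x) = face G (Suc m) (j - 1) b (face G (Suc (Suc m)) i a x)) \<and>
    \<comment> \<open>degen/degen\<close>
    (\<forall>m i j y. y \<in> cell G m \<and> 1 \<le> i \<and> i \<le> j \<and> j \<le> Suc m \<longrightarrow>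
        degen G (Suc (Suc m)) i (degen G (Suc m) j y) = degen G (Suc (Suc m)) (Suc j) (degen G (Suc m) i y)) \<and>
    \<comment> \<open>face/degen\<close>
    (\<forall>m i j a y. y \<in> cell G m \<and> 1 \<le> i \<and> i \<le> Suc m \<and> 1 \<le> j \<and> j \<le> Suc m \<longrightarrow>
        (i < j \<longrightarrow> face G (Suc m) i a (degen G (Suc m) j y) = degen G m (j - 1) (face G m i a y)) \<and>
        (j < i \<longrightarrow> face G (Suc m) i a (degen G (Suc m) j y) = degen G m j (face G m (i - 1) a y)) \<and>
        (i = j \<longrightarrow> face G (Suc m) i a (degen G (Suc m) j y) = y)) \<and>
    \<comment> \<open>conn/conn\<close>
    (\<forall>m i j a b x. x \<in> cell G m \<and> 1 \<le> i \<and> i < j \<and> j \<le> m \<longrightarrow>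
        conn G (Suc m) i a (conn G m j b x) = conn G (Suc m) (Suc j) b (conn G m i a x)) \<and>
    (\<forall>m i a x. x \<in> cell G m \<and> 1 \<le> i \<and> i \<le> m \<longrightarrow>
        conn G (Suc m) i a (conn G m i a x) = conn G (Suc m) (Suc i) a (conn G m i a x)) \<and>
    \<comment> \<open>conn/degen\<close>
    (\<forall>m i j a y. y \<in> cell G m \<and> 1 \<le> i \<and> i \<le> Suc m \<and> 1 \<le> j \<and> j \<le> Suc m \<longrightarrow>
        (i < j \<longrightarrow> conn G (Suc m) i a (degen G (Suc m) j y) = degen G (Suc (Suc m)) (Suc j) (conn G m i a y)) \<and>
        (j < i \<longrightarrow> conn G (Suc m) i a (degen G (Suc m) j y) = degen G (Suc (Suc m)) j (conn G m (i - 1) a y)) \<and>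
        (i = j \<longrightarrow> conn G (Suc m) i a (degen G (Suc m) j y) = degen G (Suc (Suc m)) (Suc j) (degen G (Suc m) j y))) \<and>
    \<comment> \<open>face/conn\<close>
    (\<forall>m i j a b x. x \<in> cell G m \<and> 1 \<le> j \<and> j \<le> m \<and> 1 \<le> i \<and> i \<le> Suc m \<longrightarrow>
        (i < j \<longrightarrow> face G (Suc m) i a (conn G m j b x) = conn G (m - 1) (j - 1) b (face G m i a x)) \<and>
        (Suc j < i \<longrightarrow> face G (Suc m) i a (conn G m j b x) = conn G (m - 1) j b (face G m (i - 1) a x))) \<and>
    (\<forall>m j a x. x \<in> cell G m \<and> 1 \<le> j \<and> j \<le> m \<longrightarrow>
        face G (Suc m) j a (conn G m j a x) = x \<and>
        face G (Suc m) (Suc j) a (conn G m j a x) = x \<and>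
        face G (Suc m) j a (conn G m j (\<not> a) x) = degen G m j (face G m j a x) \<and>
        face G (Suc m) (Suc j) a (conn G m j (\<not> a) x) = degen G m j (face G m j a x)) \<and>
    \<comment> \<open>face/comp\<close>
    (\<forall>m j a b. composable G m j a b \<longrightarrow>
        face G m j False (comp G m j a b) = face G m j False a \<and>
        face G m j True (comp G m j a b) = face G m j True b \<and>
        (\<forall>i s. 1 \<le> i \<and> i < j \<longrightarrow>
           face G m i s (comp G m j a b) = comp G (m - 1) (j - 1) (face G m i s a) (face G m i s b)) \<and>
        (\<forall>i s. j < i \<and> i \<le> m \<longrightarrow>
           face G m i s (comp G m j a b) = comp G (m - 1) j (face G m i s a) (face G m i s b))) \<and>
    \<comment> \<open>interchange\<close>
    (\<forall>m i j a b c d. i \<noteq> j \<and> composable G m i a b \<and> composable G m i c d \<and>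
        composable G m j a c \<and> composable G m j b d \<longrightarrow>
        comp G m j (comp G m i a b) (comp G m i c d) = comp G m i (comp G m j a c) (comp G m j b d)) \<and>
    \<comment> \<open>degen/comp\<close>
    (\<forall>m i j a b. composable G m j a b \<and> 1 \<le> i \<and> i \<le> Suc m \<longrightarrow>
        (i \<le> j \<longrightarrow> degen G (Suc m) i (comp G m j a b) =
                    comp G (Suc m) (Suc j) (degen G (Suc m) i a) (degen G (Suc m) i b)) \<and>
        (j < i \<longrightarrow> degen G (Suc m) i (comp G m j a b) =
                    comp G (Suc m) j (degen G (Suc m) i a) (degen G (Suc m) i b))) \<and>
    \<comment> \<open>conn/comp\<close>
    (\<forall>m i j s a b. composable G m j a b \<and> 1 \<le> i \<and> i \<le> m \<longrightarrow>
        (i < j \<longrightarrow> conn G m i s (comp G m j a b) = comp G (Suc m) (Suc j) (conn G m i s a) (conn G m i s b)) \<and>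
        (j < i \<longrightarrow> conn G m i s (comp G m j a b) = comp G (Suc m) j (conn G m i s a) (conn G m i s b))) \<and>
    (\<forall>m j a b. composable G m j a b \<longrightarrow>
        conn G m j True (comp G m j a b) =
          comp G (Suc m) (Suc j)
            (comp G (Suc m) j (conn G m j True a) (degen G (Suc m) j a))
            (comp G (Suc m) j (degen G (Suc m) (Suc j) a) (conn G m j True b)) \<and>
        conn G m j False (comp G m j a b) =
          comp G (Suc m) (Suc j)
            (comp G (Suc m) j (conn G m j False a) (degen G (Suc m) (Suc j) b))
            (comp G (Suc m) j (degen G (Suc m) j b) (conn G m j False b))) \<and>
    \<comment> \<open>each \<circ>_j is a category with identities \<epsilon>_j y\<close>
    (\<forall>m j a b c. composable G m j a b \<and> composable G m j b c \<longrightarrow>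
        comp G m j (comp G m j a b) c = comp G m j a (comp G m j b c)) \<and>
    (\<forall>m j a. a \<in> cell G m \<and> 1 \<le> j \<and> j \<le> m \<longrightarrow>
        comp G m j (degen G m j (face G m j False a)) a = a \<and>
        comp G m j a (degen G m j (face G m j True a)) = a) \<and>
    \<comment> \<open>connection cancellation\<close>
    (\<forall>m i x. x \<in> cell G m \<and> 1 \<le> i \<and> i \<le> m \<longrightarrow>
        comp G (Suc m) i (conn G m i True x) (conn G m i False x) = degen G (Suc m) (Suc i) x \<and>
        comp G (Suc m) (Suc i) (conn G m i True x) (conn G m i False x) = degen G (Suc m) i x)"

definition psi :: "'a cubical_data \<Rightarrow> nat \<Rightarrow> nat \<Rightarrow> 'a \<Rightarrow> 'a" where
  "psi G m i x = comp G m (Suc i)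
      (comp G m (Suc i) (conn G (m - 1) i True (face G m (Suc i) False x)) x)
      (conn G (m - 1) i False (face G m (Suc i) True x))"

definition psi_defined :: "'a cubical_data \<Rightarrow> nat \<Rightarrow> nat \<Rightarrow> 'a \<Rightarrow> bool" where
  "psi_defined G m i x \<longleftrightarrow>
     composable G m (Suc i) (conn G (m - 1) i True (face G m (Suc i) False x)) x \<and>
     composable G m (Suc i) (comp G m (Suc i) (conn G (m - 1) i True (face G m (Suc i) False x)) x)
                               (conn G (m - 1) i False (face G m (Suc i) True x))"

text \<open>An n-shell: z i a = z^a_i for 1 \<le> i \<le> n (other values irrelevant).\<close>
definition is_shell :: "'a cubical_data \<Rightarrow> nat \<Rightarrow> (nat \<Rightarrow> bool \<Rightarrow> 'a) \<Rightarrow> bool" where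
  "is_shell G n z \<longleftrightarrow> (\<forall>i a. 1 \<le> i \<and> i \<le> n \<longrightarrow> z i a \<in> cell G (n - 1)) \<and>
     (\<forall>i j a b. 1 \<le> i \<and> i < j \<and> j \<le> n \<longrightarrow>
        face G (n - 1) i a (z j b) = face G (n - 1) (j - 1) b (z i a))"

definition bdry :: "'a cubical_data \<Rightarrow> nat \<Rightarrow> 'a \<Rightarrow> nat \<Rightarrow> bool \<Rightarrow> 'a" where
  "bdry G n x i a = face G n i a x"

definition shell_psi :: "'a cubical_data \<Rightarrow> nat \<Rightarrow> nat \<Rightarrow> (nat \<Rightarrow> bool \<Rightarrow> 'a) \<Rightarrow> nat \<Rightarrow> bool \<Rightarrow> 'a" where
  "shell_psi G n j z i a =
     (if i < j then psi G (n - 1) (j - 1) (z i a)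
      else if i = j then
        (if a then comp G (n - 1) j (z (Suc j) False) (z j True)
         else comp G (n - 1) j (z j False) (z (Suc j) True))
      else if i = Suc j then degen G (n - 1) j (face G (n - 1) j a (z (Suc j) a))
      else psi G (n - 1) j (z i a))"

end

theory Submission
  imports Defs
begin


context
  fixes G :: "'a cubical_data"
  assumes C: "cubical_omega_cat_conn G"
begin

lemma face_cell_ax: "\<forall>m i a x. x \<in> cell G (Suc m) \<and> 1 \<le> i \<and> i \<le> Suc m \<longrightarrow> face G (Suc m) i a x \<in> cell G m"
  using C unfolding cubical_omega_cat_conn_def by (elim conjE) assumption
lemma face_cell: "x \<in> cell G (Suc m) \<Longrightarrow> 1 \<le> i \<Longrightarrow> i \<le> Suc m \<Longrightarrow> face G (Suc m) i a x \<in> cell G m"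
  using face_cell_ax by blast

lemma degen_cell_ax: "\<forall>m i y. y \<in> cell G m \<and> 1 \<le> i \<and> i \<le> Suc m \<longrightarrow> degen G (Suc m) i y \<in> cell G (Suc m)"
  using C unfolding cubical_omega_cat_conn_def by (elim conjE) assumption
lemma degen_cell: "y \<in> cell G m \<Longrightarrow> 1 \<le> i \<Longrightarrow> i \<le> Suc m \<Longrightarrow> degen G (Suc m) i y \<in> cell G (Suc m)"
  using degen_cell_ax by blast

lemma conn_cell_ax: "\<forall>m i a x. x \<in> cell G m \<and> 1 \<le> i \<and> i \<le> m \<longrightarrow> conn G m i a x \<in> cell G (Suc m)"
  using C unfolding cubical_omega_cat_conn_def by (elim conjE) assumption
lemma conn_cell: "x \<in> cell G m \<Longrightarrow> 1 \<le> i \<Longrightarrow> i \<le> m \<Longrightarrow> conn G m i a x \<in> cell G (Suc m)"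
  using conn_cell_ax by blast

lemma comp_cell_ax: "\<forall>m j a b. composable G m j a b \<longrightarrow> comp G m j a b \<in> cell G m"
  using C unfolding cubical_omega_cat_conn_def by (elim conjE) assumption
lemma comp_cell: "composable G m j a b \<Longrightarrow> comp G m j a b \<in> cell G m"
  using comp_cell_ax by blast

lemma ff_ax: "\<forall>m i j a b x. x \<in> cell G (Suc (Suc m)) \<and> 1 \<le> i \<and> i < j \<and> j \<le> Suc (Suc m) \<longrightarrow>
        face G (Suc m) i a (face G (Suc (Suc m)) j b x) = face G (Suc m) (j - 1) b (face G (Suc (Suc m)) i a x)"
  using C unfolding cubical_omega_cat_conn_def by (elim conjE) assumption
lemma ff: "x \<in> cell G (Suc (Suc m)) \<Longrightarrow> 1 \<le> i \<Longrightarrow> i < j \<Longrightarrow> j \<le> Suc (Suc m) \<Longrightarrow>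
   face G (Suc m) i a (face G (Suc (Suc m)) j b x) = face G (Suc m) (j - 1) b (face G (Suc (Suc m)) i a x)"
  using ff_ax by blast

lemma fd_ax: "\<forall>m i j a y. y \<in> cell G m \<and> 1 \<le> i \<and> i \<le> Suc m \<and> 1 \<le> j \<and> j \<le> Suc m \<longrightarrow>
        (i < j \<longrightarrow> face G (Suc m) i a (degen G (Suc m) j y) = degen G m (j - 1) (face G m i a y)) \<and>
        (j < i \<longrightarrow> face G (Suc m) i a (degen G (Suc m) j y) = degen G m j (face G m (i - 1) a y)) \<and>
        (i = j \<longrightarrow> face G (Suc m) i a (degen G (Suc m) j y) = y)"
  using C unfolding cubical_omega_cat_conn_def by (elim conjE) assumption

lemma fd_lt: "y \<in> cell G m \<Longrightarrow> 1 \<le> i \<Longrightarrow> i < j \<Longrightarrow> j \<le> Suc m \<Longrightarrow>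
   face G (Suc m) i a (degen G (Suc m) j y) = degen G m (j - 1) (face G m i a y)"
  using fd_ax by simp
lemma fd_gt: "y \<in> cell G m \<Longrightarrow> 1 \<le> j \<Longrightarrow> j < i \<Longrightarrow> i \<le> Suc m \<Longrightarrow>
   face G (Suc m) i a (degen G (Suc m) j y) = degen G m j (face G m (i - 1) a y)"
  using fd_ax by simp
lemma fd_eq: "y \<in> cell G m \<Longrightarrow> 1 \<le> i \<Longrightarrow> i \<le> Suc m \<Longrightarrow>
   face G (Suc m) i a (degen G (Suc m) i y) = y"
  using fd_ax by simp

lemma fc_ax: "\<forall>m i j a b x. x \<in> cell G m \<and> 1 \<le> j \<and> j \<le> m \<and> 1 \<le> i \<and> i \<le> Suc m \<longrightarrow>
        (i < j \<longrightarrow> face G (Suc m) i a (conn G m j b x) = conn G (m - 1) (j - 1) b (face G m i a x)) \<and>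
        (Suc j < i \<longrightarrow> face G (Suc m) i a (conn G m j b x) = conn G (m - 1) j b (face G m (i - 1) a x))"
  using C unfolding cubical_omega_cat_conn_def by (elim conjE) assumption

lemma fc_lt: "x \<in> cell G m \<Longrightarrow> 1 \<le> i \<Longrightarrow> i < j \<Longrightarrow> j \<le> m \<Longrightarrow>
   face G (Suc m) i a (conn G m j b x) = conn G (m - 1) (j - 1) b (face G m i a x)"
  using fc_ax by simp
lemma fc_gt: "x \<in> cell G m \<Longrightarrow> 1 \<le> j \<Longrightarrow> Suc j < i \<Longrightarrow> i \<le> Suc m \<Longrightarrow>
   face G (Suc m) i a (conn G m j b x) = conn G (m - 1) j b (face G m (i - 1) a x)"
  using fc_ax by simp

lemma fc_eq_ax: "\<forall>m j a x. x \<in> cell G m \<and> 1 \<le> j \<and> j \<le> m \<longrightarrow>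
        face G (Suc m) j a (conn G m j a x) = x \<and>
        face G (Suc m) (Suc j) a (conn G m j a x) = x \<and>
        face G (Suc m) j a (conn G m j (\<not> a) x) = degen G m j (face G m j a x) \<and>
        face G (Suc m) (Suc j) a (conn G m j (\<not> a) x) = degen G m j (face G m j a x)"
  using C unfolding cubical_omega_cat_conn_def by (elim conjE) assumption

lemma fc_eq1: "x \<in> cell G m \<Longrightarrow> 1 \<le> j \<Longrightarrow> j \<le> m \<Longrightarrow> face G (Suc m) j a (conn G m j a x) = x"
  using fc_eq_ax by blast
lemma fc_eq2: "x \<in> cell G m \<Longrightarrow> 1 \<le> j \<Longrightarrow> j \<le> m \<Longrightarrow> face G (Suc m) (Suc j) a (conn G m j a x) = x"
  using fc_eq_ax by blast
lemma fc_eq3: "x \<in> cell G m \<Longrightarrow> 1 \<le> j \<Longrightarrow> j \<le> m \<Longrightarrow> b = (\<not> a) \<Longrightarrow>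
   face G (Suc m) j a (conn G m j b x) = degen G m j (face G m j a x)"
  using fc_eq_ax by blast
lemma fc_eq4: "x \<in> cell G m \<Longrightarrow> 1 \<le> j \<Longrightarrow> j \<le> m \<Longrightarrow> b = (\<not> a) \<Longrightarrow>
   face G (Suc m) (Suc j) a (conn G m j b x) = degen G m j (face G m j a x)"
  using fc_eq_ax by blast

lemma fcomp_ax: "\<forall>m j a b. composable G m j a b \<longrightarrow>
        face G m j False (comp G m j a b) = face G m j False a \<and>
        face G m j True (comp G m j a b) = face G m j True b \<and>
        (\<forall>i s. 1 \<le> i \<and> i < j \<longrightarrow>
           face G m i s (comp G m j a b) = comp G (m - 1) (j - 1) (face G m i s a) (face G m i s b)) \<and>
        (\<forall>i s. j < i \<and> i \<le> m \<longrightarrow>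
           face G m i s (comp G m j a b) = comp G (m - 1) j (face G m i s a) (face G m i s b))"
  using C unfolding cubical_omega_cat_conn_def by (elim conjE) assumption

lemma fcomp_F: "composable G m j a b \<Longrightarrow> face G m j False (comp G m j a b) = face G m j False a"
  using fcomp_ax by blast
lemma fcomp_T: "composable G m j a b \<Longrightarrow> face G m j True (comp G m j a b) = face G m j True b"
  using fcomp_ax by blast
lemma fcomp_lt: "composable G m j a b \<Longrightarrow> 1 \<le> i \<Longrightarrow> i < j \<Longrightarrow>
   face G m i s (comp G m j a b) = comp G (m - 1) (j - 1) (face G m i s a) (face G m i s b)"
  using fcomp_ax by blast
lemma fcomp_gt: "composable G m j a b \<Longrightarrow> j < i \<Longrightarrow> i \<le> m \<Longrightarrow>
   face G m i s (comp G m j a b) = comp G (m - 1) j (face G m i s a) (face G m i s b)"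
  using fcomp_ax by blast

lemma id_ax: "\<forall>m j a. a \<in> cell G m \<and> 1 \<le> j \<and> j \<le> m \<longrightarrow>
        comp G m j (degen G m j (face G m j False a)) a = a \<and>
        comp G m j a (degen G m j (face G m j True a)) = a"
  using C unfolding cubical_omega_cat_conn_def by (elim conjE) assumption
lemma idL: "a \<in> cell G m \<Longrightarrow> 1 \<le> j \<Longrightarrow> j \<le> m \<Longrightarrow> comp G m j (degen G m j (face G m j False a)) a = a"
  using id_ax by blast
lemma idR: "a \<in> cell G m \<Longrightarrow> 1 \<le> j \<Longrightarrow> j \<le> m \<Longrightarrow> comp G m j a (degen G m j (face G m j True a)) = a"
  using id_ax by blast

end


context
  fixes G :: "'a cubical_data"
  assumes C: "cubical_omega_cat_conn G"
begin

lemmas A = face_cell[OF C] degen_cell[OF C] conn_cell[OF C] comp_cell[OF C] ff[OF C]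
  fd_lt[OF C] fd_gt[OF C] fd_eq[OF C] fc_lt[OF C] fc_gt[OF C] fc_eq1[OF C] fc_eq2[OF C]
  fc_eq3[OF C] fc_eq4[OF C] fcomp_F[OF C] fcomp_T[OF C] fcomp_lt[OF C] fcomp_gt[OF C] idL[OF C] idR[OF C]

lemma psi_comps:
  assumes x: "x \<in> cell G (Suc k)" and i: "1 \<le> i" "i \<le> k"
  defines "y0 \<equiv> face G (Suc k) (Suc i) False x" and "y1 \<equiv> face G (Suc k) (Suc i) True x"
  defines "P \<equiv> conn G k i True y0" and "Q \<equiv> conn G k i False y1"
  shows "composable G (Suc k) (Suc i) P x"
    "composable G (Suc k) (Suc i) (comp G (Suc k) (Suc i) P x) Q"
    "P \<in> cell G (Suc k)" "Q \<in> cell G (Suc k)" "y0 \<in> cell G k" "y1 \<in> cell G k"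
    "comp G (Suc k) (Suc i) P x \<in> cell G (Suc k)"
proof -
  show y0: "y0 \<in> cell G k" "y1 \<in> cell G k" using x i by (auto simp: y0_def y1_def intro!: A(1))
  show P: "P \<in> cell G (Suc k)" "Q \<in> cell G (Suc k)" using y0 i by (auto simp: P_def Q_def intro!: A(3))
  show c1: "composable G (Suc k) (Suc i) P x"
    unfolding composable_def using P x i y0 by (simp add: P_def y0_def A(12))
  then show c2: "comp G (Suc k) (Suc i) P x \<in> cell G (Suc k)" by (rule A(4))
  show "composable G (Suc k) (Suc i) (comp G (Suc k) (Suc i) P x) Q"
    unfolding composable_def using P x i y0 c1 c2 by (simp add: Q_def y1_def A(12) A(16))
qed

lemma psi_ok: "x \<in> cell G (Suc k) \<Longrightarrow> 1 \<le> i \<Longrightarrow> i \<le> k \<Longrightarrow> psi_defined G (Suc k) i x"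
  unfolding psi_defined_def using psi_comps by simp

lemma psi_cell: "x \<in> cell G (Suc k) \<Longrightarrow> 1 \<le> i \<Longrightarrow> i \<le> k \<Longrightarrow> psi G (Suc k) i x \<in> cell G (Suc k)"
  unfolding psi_def using psi_comps(2) A(4) by simp

lemma psi_unf: "psi G (Suc k) i x = comp G (Suc k) (Suc i)
      (comp G (Suc k) (Suc i) (conn G k i True (face G (Suc k) (Suc i) False x)) x)
      (conn G k i False (face G (Suc k) (Suc i) True x))"
  unfolding psi_def by simp

lemma psi_face_lt:
  assumes x: "x \<in> cell G (Suc k)" and i: "1 \<le> i" "i \<le> k" and l: "1 \<le> l" "l < i"
  shows "face G (Suc k) l a (psi G (Suc k) i x) = psi G k (i - 1) (face G (Suc k) l a x)"
proof -
  obtain k' where k: "k = Suc k'" using i l by (cases k) auto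
  note c = psi_comps[OF x i]
  let ?y0 = "face G (Suc k) (Suc i) False x" and ?y1 = "face G (Suc k) (Suc i) True x"
  let ?P = "conn G k i True ?y0" and ?Q = "conn G k i False ?y1"
  have fy0: "face G k l a ?y0 = face G k i False (face G (Suc k) l a x)"
    using A(5)[of x k' l "Suc i" a False] x i l k by simp
  have fy1: "face G k l a ?y1 = face G k i True (face G (Suc k) l a x)"
    using A(5)[of x k' l "Suc i" a True] x i l k by simp
  have fP: "face G (Suc k) l a ?P = conn G (k - 1) (i - 1) True (face G k i False (face G (Suc k) l a x))"
    using A(9)[of ?y0 k l i a True] c fy0 i l by simp
  have fQ: "face G (Suc k) l a ?Q = conn G (k - 1) (i - 1) False (face G k i True (face G (Suc k) l a x))"
    using A(9)[of ?y1 k l i a False] c fy1 i l by simp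
  have "face G (Suc k) l a (psi G (Suc k) i x) =
     comp G k i (comp G k i (face G (Suc k) l a ?P) (face G (Suc k) l a x)) (face G (Suc k) l a ?Q)"
    unfolding psi_unf using A(17)[OF c(2), of l a] A(17)[OF c(1), of l a] i l by simp
  also have "\<dots> = psi G k (i - 1) (face G (Suc k) l a x)"
    unfolding psi_def fP fQ using i l by simp
  finally show ?thesis .
qed

lemma psi_face_gt:
  assumes x: "x \<in> cell G (Suc k)" and i: "1 \<le> i" "i \<le> k" and l: "Suc i < l" "l \<le> Suc k"
  shows "face G (Suc k) l a (psi G (Suc k) i x) = psi G k i (face G (Suc k) l a x)"
proof -
  obtain k' where k: "k = Suc k'" using i l by (cases k) auto
  note c = psi_comps[OF x i]
  let ?y0 = "face G (Suc k) (Suc i) False x" and ?y1 = "face G (Suc k) (Suc i) True x"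
  let ?P = "conn G k i True ?y0" and ?Q = "conn G k i False ?y1"
  have fy0: "face G k (l - 1) a ?y0 = face G k (Suc i) False (face G (Suc k) l a x)"
    using A(5)[of x k' "Suc i" l False a] x i l k by simp
  have fy1: "face G k (l - 1) a ?y1 = face G k (Suc i) True (face G (Suc k) l a x)"
    using A(5)[of x k' "Suc i" l True a] x i l k by simp
  have fP: "face G (Suc k) l a ?P = conn G (k - 1) i True (face G k (Suc i) False (face G (Suc k) l a x))"
    using A(10)[of ?y0 k i l a True] c fy0 i l by simp
  have fQ: "face G (Suc k) l a ?Q = conn G (k - 1) i False (face G k (Suc i) True (face G (Suc k) l a x))"
    using A(10)[of ?y1 k i l a False] c fy1 i l by simp
  have "face G (Suc k) l a (psi G (Suc k) i x) =
     comp G k (Suc i) (comp G k (Suc i) (face G (Suc k) l a ?P) (face G (Suc k) l a x)) (face G (Suc k) l a ?Q)"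
    unfolding psi_unf using A(18)[OF c(2), of l a] A(18)[OF c(1), of l a] i l by simp
  also have "\<dots> = psi G k i (face G (Suc k) l a x)"
    unfolding psi_def fP fQ using i l k by simp
  finally show ?thesis .
qed

lemma psi_face_Si:
  assumes x: "x \<in> cell G (Suc k)" and i: "1 \<le> i" "i \<le> k"
  shows "face G (Suc k) (Suc i) a (psi G (Suc k) i x) = degen G k i (face G k i a (face G (Suc k) (Suc i) a x))"
proof (cases a)
  case True
  note c = psi_comps[OF x i]
  show ?thesis using True unfolding psi_unf using A(16)[OF c(2)] A(14)[of "face G (Suc k) (Suc i) True x" k i False True] c i
    by simp
next
  case False
  note c = psi_comps[OF x i]
  show ?thesis using False unfolding psi_unf using A(15)[OF c(2)] A(15)[OF c(1)] A(14)[of "face G (Suc k) (Suc i) False x" k i True False] c i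
    by simp
qed

lemma psi_face_iF:
  assumes x: "x \<in> cell G (Suc k)" and i: "1 \<le> i" "i \<le> k"
  shows "face G (Suc k) i False (psi G (Suc k) i x) =
     comp G k i (face G (Suc k) i False x) (face G (Suc k) (Suc i) True x)"
proof -
  obtain k' where k: "k = Suc k'" using i by (cases k) auto
  note c = psi_comps[OF x i]
  let ?y0 = "face G (Suc k) (Suc i) False x" and ?y1 = "face G (Suc k) (Suc i) True x"
  have xi: "face G (Suc k) i False x \<in> cell G k" using A(1) x i by simp
  have e: "face G k i False ?y0 = face G k i False (face G (Suc k) i False x)"
    using A(5)[of x k' i "Suc i" False False] x i k by simp
  have fP: "face G (Suc k) i False (conn G k i True ?y0) = degen G k i (face G k i False (face G (Suc k) i False x))"
    using A(13)[of ?y0 k i True False] c i e by simp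
  have fQ: "face G (Suc k) i False (conn G k i False ?y1) = ?y1"
    using A(11) c i by simp
  have "face G (Suc k) i False (psi G (Suc k) i x) =
     comp G k i (comp G k i (face G (Suc k) i False (conn G k i True ?y0)) (face G (Suc k) i False x))
        (face G (Suc k) i False (conn G k i False ?y1))"
    unfolding psi_unf using A(17)[OF c(2), of i False] A(17)[OF c(1), of i False] i by simp
  also have "\<dots> = comp G k i (face G (Suc k) i False x) ?y1"
    unfolding fP fQ using A(19)[OF xi] i by simp
  finally show ?thesis .
qed

lemma psi_face_iT:
  assumes x: "x \<in> cell G (Suc k)" and i: "1 \<le> i" "i \<le> k"
  shows "face G (Suc k) i True (psi G (Suc k) i x) =
     comp G k i (face G (Suc k) (Suc i) False x) (face G (Suc k) i True x)"
proof -
  obtain k' where k: "k = Suc k'" using i by (cases k) auto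
  note c = psi_comps[OF x i]
  let ?y0 = "face G (Suc k) (Suc i) False x" and ?y1 = "face G (Suc k) (Suc i) True x"
  let ?xT = "face G (Suc k) i True x"
  have xi: "?xT \<in> cell G k" using A(1) x i by simp
  have e: "face G k i True ?y1 = face G k i True ?xT"
    using A(5)[of x k' i "Suc i" True True] x i k by simp
  have e2: "face G k i True ?y0 = face G k i False ?xT"
    using A(5)[of x k' i "Suc i" True False] x i k by simp
  have cc: "composable G k i ?y0 ?xT" unfolding composable_def using c xi e2 i by simp
  have fP: "face G (Suc k) i True (conn G k i True ?y0) = ?y0"
    using A(11) c i by simp
  have fQ: "face G (Suc k) i True (conn G k i False ?y1) = degen G k i (face G k i True ?xT)"
    using A(13)[of ?y1 k i False True] c i e by simp
  have "face G (Suc k) i True (psi G (Suc k) i x) =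
     comp G k i (comp G k i (face G (Suc k) i True (conn G k i True ?y0)) ?xT)
        (face G (Suc k) i True (conn G k i False ?y1))"
    unfolding psi_unf using A(17)[OF c(2), of i True] A(17)[OF c(1), of i True] i by simp
  also have "\<dots> = comp G k i ?y0 ?xT"
    unfolding fP fQ using A(20)[OF A(4)[OF cc], of i] A(16)[OF cc] i by simp
  finally show ?thesis .
qed

end


lemma shell_compat:
  assumes C: "cubical_omega_cat_conn G" and j: "1 \<le> j" "j \<le> Suc k"
    and Z: "\<And>i a. 1 \<le> i \<Longrightarrow> i \<le> Suc (Suc k) \<Longrightarrow> z i a \<in> cell G (Suc k)"
    and S: "\<And>i i' a b. 1 \<le> i \<Longrightarrow> i < i' \<Longrightarrow> i' \<le> Suc (Suc k) \<Longrightarrow>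
       face G (Suc k) i a (z i' b) = face G (Suc k) (i' - 1) b (z i a)"
    and I: "1 \<le> I" "I < K" "K \<le> Suc (Suc k)"
  defines "w \<equiv> shell_psi G (Suc (Suc k)) j z"
  shows "face G (Suc k) I a (w K b) = face G (Suc k) (K - 1) b (w I a)"
proof -
  note A = A[OF C]
  note P = psi_face_lt[OF C] psi_face_gt[OF C] psi_face_Si[OF C] psi_face_iF[OF C] psi_face_iT[OF C]
  have c1: "composable G (Suc k) j (z j False) (z (Suc j) True)"
    unfolding composable_def using Z j S[of j "Suc j" False True] by simp
  have c2: "composable G (Suc k) j (z (Suc j) False) (z j True)"
    unfolding composable_def using Z j S[of j "Suc j" True False] by simp
  consider "K < j" | "K = j" | "I < j" "K = Suc j" | "I < j" "Suc j < K" | "I = j" "K = Suc j"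
    | "I = j" "Suc j < K" | "I = Suc j" "Suc j < K" | "Suc j < I" using I by linarith
  then show ?thesis
  proof cases
    case 1
    have "face G (Suc k) I a (w K b) = psi G k (j - 1 - 1) (face G (Suc k) I a (z K b))"
      unfolding w_def shell_psi_def using 1 I j Z P(1)[of "z K b" k "j - 1" I a] by simp
    moreover have "face G (Suc k) (K - 1) b (w I a) = psi G k (j - 1 - 1) (face G (Suc k) (K - 1) b (z I a))"
      unfolding w_def shell_psi_def using 1 I j Z P(1)[of "z I a" k "j - 1" "K - 1" b] by simp
    ultimately show ?thesis using S[of I K a b] I by simp
  next
    case 2
    show ?thesis
    proof (cases b)
      case True
      have "face G (Suc k) I a (w K b) = comp G k (j - 1) (face G (Suc k) I a (z (Suc j) False)) (face G (Suc k) I a (z j True))"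
        unfolding w_def shell_psi_def using 2 I True A(17)[OF c2, of I a] by simp
      also have "\<dots> = comp G k (j - 1) (face G (Suc k) j False (z I a)) (face G (Suc k) (j - 1) True (z I a))"
        using S[of I "Suc j" a False] S[of I j a True] I 2 j by simp
      also have "\<dots> = face G (Suc k) (K - 1) b (w I a)"
        unfolding w_def shell_psi_def using 2 I j Z True P(5)[of "z I a" k "j - 1"] by simp
      finally show ?thesis .
    next
      case False
      have "face G (Suc k) I a (w K b) = comp G k (j - 1) (face G (Suc k) I a (z j False)) (face G (Suc k) I a (z (Suc j) True))"
        unfolding w_def shell_psi_def using 2 I False A(17)[OF c1, of I a] by simp
      also have "\<dots> = comp G k (j - 1) (face G (Suc k) (j - 1) False (z I a)) (face G (Suc k) j True (z I a))"
        using S[of I "Suc j" a True] S[of I j a False] I 2 j by simp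
      also have "\<dots> = face G (Suc k) (K - 1) b (w I a)"
        unfolding w_def shell_psi_def using 2 I j Z False P(4)[of "z I a" k "j - 1"] by simp
      finally show ?thesis .
    qed
  next
    case 3
    obtain k' where k: "k = Suc k'" using 3 I j by (cases k) auto
    have y: "face G (Suc k) j b (z (Suc j) b) \<in> cell G k" using A(1) Z j by simp
    have "face G (Suc k) I a (w K b) = degen G k (j - 1) (face G k I a (face G (Suc k) j b (z (Suc j) b)))"
      unfolding w_def shell_psi_def using 3 I A(6)[OF y, of I j a] j by simp
    also have "face G k I a (face G (Suc k) j b (z (Suc j) b)) = face G k (j - 1) b (face G (Suc k) I a (z (Suc j) b))"
      using A(5)[of "z (Suc j) b" k' I j a b] Z 3 I j k by simp
    also have "face G (Suc k) I a (z (Suc j) b) = face G (Suc k) j b (z I a)"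
      using S[of I "Suc j" a b] 3 I j by simp
    also have "degen G k (j - 1) (face G k (j - 1) b (face G (Suc k) j b (z I a))) = face G (Suc k) (K - 1) b (w I a)"
      unfolding w_def shell_psi_def using 3 I j Z P(3)[of "z I a" k "j - 1" b] by simp
    finally show ?thesis .
  next
    case 4
    have "face G (Suc k) I a (w K b) = psi G k (j - 1) (face G (Suc k) I a (z K b))"
      unfolding w_def shell_psi_def using 4 I j Z P(1)[of "z K b" k j I a] by simp
    moreover have "face G (Suc k) (K - 1) b (w I a) = psi G k (j - 1) (face G (Suc k) (K - 1) b (z I a))"
      unfolding w_def shell_psi_def using 4 I j Z P(2)[of "z I a" k "j - 1" "K - 1" b] by simp
    ultimately show ?thesis using S[of I K a b] I by simp
  next
    case 5
    have y: "face G (Suc k) j b (z (Suc j) b) \<in> cell G k" using A(1) Z j by simp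
    have "face G (Suc k) I a (w K b) = face G (Suc k) j b (z (Suc j) b)"
      unfolding w_def shell_psi_def using 5 A(8)[OF y] j by simp
    also have "\<dots> = face G (Suc k) (K - 1) b (w I a)"
      unfolding w_def shell_psi_def using 5 j A(15)[OF c1] A(16)[OF c1] A(15)[OF c2] A(16)[OF c2]
        S[of j "Suc j" False False] S[of j "Suc j" True True]
      by (cases a; cases b) simp_all
    finally show ?thesis .
  next
    case 6
    show ?thesis
    proof (cases a)
      case True
      have "face G (Suc k) I a (w K b) = comp G k j (face G (Suc k) (Suc j) False (z K b)) (face G (Suc k) j True (z K b))"
        unfolding w_def shell_psi_def using 6 I j Z True P(5)[of "z K b" k j] by simp
      also have "\<dots> = face G (Suc k) (K - 1) b (w I a)"
        unfolding w_def shell_psi_def using 6 I j True A(18)[OF c2, of "K - 1" b]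
          S[of "Suc j" K False b] S[of j K True b] by simp
      finally show ?thesis .
    next
      case False
      have "face G (Suc k) I a (w K b) = comp G k j (face G (Suc k) j False (z K b)) (face G (Suc k) (Suc j) True (z K b))"
        unfolding w_def shell_psi_def using 6 I j Z False P(4)[of "z K b" k j] by simp
      also have "\<dots> = face G (Suc k) (K - 1) b (w I a)"
        unfolding w_def shell_psi_def using 6 I j False A(18)[OF c1, of "K - 1" b]
          S[of "Suc j" K True b] S[of j K False b] by simp
      finally show ?thesis .
    qed
  next
    case 7
    obtain k' where k: "k = Suc k'" using 7 I j by (cases k) auto
    have y: "face G (Suc k) j a (z (Suc j) a) \<in> cell G k" using A(1) Z j by simp
    have "face G (Suc k) I a (w K b) = degen G k j (face G k j a (face G (Suc k) (Suc j) a (z K b)))"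
      unfolding w_def shell_psi_def using 7 I j Z P(3)[of "z K b" k j a] by simp
    also have "face G (Suc k) (Suc j) a (z K b) = face G (Suc k) (K - 1) b (z (Suc j) a)"
      using S[of "Suc j" K a b] 7 I j by simp
    also have "face G k j a (face G (Suc k) (K - 1) b (z (Suc j) a)) = face G k (K - 1 - 1) b (face G (Suc k) j a (z (Suc j) a))"
      using A(5)[of "z (Suc j) a" k' j "K - 1" a b] Z 7 I j k by simp
    also have "degen G k j (face G k (K - 1 - 1) b (face G (Suc k) j a (z (Suc j) a))) = face G (Suc k) (K - 1) b (w I a)"
      unfolding w_def shell_psi_def using 7 I j A(7)[OF y, of j "K - 1" b] by simp
    finally show ?thesis .
  next
    case 8
    have "face G (Suc k) I a (w K b) = psi G k j (face G (Suc k) I a (z K b))"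
      unfolding w_def shell_psi_def using 8 I j Z P(2)[of "z K b" k j I a] by simp
    moreover have "face G (Suc k) (K - 1) b (w I a) = psi G k j (face G (Suc k) (K - 1) b (z I a))"
      unfolding w_def shell_psi_def using 8 I j Z P(2)[of "z I a" k j "K - 1" b] by simp
    ultimately show ?thesis using S[of I K a b] I by simp
  qed
qed



theorem proposition8p4:
  fixes G :: "'a cubical_data" and n j :: nat
  assumes "cubical_omega_cat_conn G" and "1 \<le> n" and "1 \<le> j" and "j \<le> n - 1"
  shows "(\<forall>z. is_shell G n z \<longrightarrow>
            composable G (n - 1) j (z j False) (z (Suc j) True) \<and>
            composable G (n - 1) j (z (Suc j) False) (z j True) \<and>
            (\<forall>i a. 1 \<le> i \<and> i < j \<longrightarrow> psi_defined G (n - 1) (j - 1) (z i a)) \<and>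
            (\<forall>i a. Suc j < i \<and> i \<le> n \<longrightarrow> psi_defined G (n - 1) j (z i a)) \<and>
            is_shell G n (shell_psi G n j z)) \<and>
         (\<forall>x \<in> cell G n. psi_defined G n j x \<and>
            (\<forall>i a. 1 \<le> i \<and> i \<le> n \<longrightarrow>
               shell_psi G n j (bdry G n x) i a = face G n i a (psi G n j x)))"
proof -
  note C = assms(1)
  obtain k where n: "n = Suc (Suc k)" using assms by (cases n; cases "n - 1") auto
  have j: "1 \<le> j" "j \<le> Suc k" using assms n by auto
  note A = A[OF C]
  note P = psi_face_lt[OF C] psi_face_gt[OF C] psi_face_Si[OF C] psi_face_iF[OF C] psi_face_iT[OF C]
    psi_ok[OF C] psi_cell[OF C]
  have part1: "composable G (Suc k) j (z j False) (z (Suc j) True) \<and>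
            composable G (Suc k) j (z (Suc j) False) (z j True) \<and>
            (\<forall>i a. 1 \<le> i \<and> i < j \<longrightarrow> psi_defined G (Suc k) (j - 1) (z i a)) \<and>
            (\<forall>i a. Suc j < i \<and> i \<le> Suc (Suc k) \<longrightarrow> psi_defined G (Suc k) j (z i a)) \<and>
            is_shell G (Suc (Suc k)) (shell_psi G (Suc (Suc k)) j z)"
    if sh: "is_shell G (Suc (Suc k)) z" for z
  proof -
    have Z: "\<And>i a. 1 \<le> i \<Longrightarrow> i \<le> Suc (Suc k) \<Longrightarrow> z i a \<in> cell G (Suc k)"
      using sh unfolding is_shell_def by simp
    have S: "\<And>i i' a b. 1 \<le> i \<Longrightarrow> i < i' \<Longrightarrow> i' \<le> Suc (Suc k) \<Longrightarrow>
       face G (Suc k) i a (z i' b) = face G (Suc k) (i' - 1) b (z i a)"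
      using sh unfolding is_shell_def by simp
    have c1: "composable G (Suc k) j (z j False) (z (Suc j) True)"
      unfolding composable_def using Z j S[of j "Suc j" False True] by simp
    have c2: "composable G (Suc k) j (z (Suc j) False) (z j True)"
      unfolding composable_def using Z j S[of j "Suc j" True False] by simp
    have d1: "\<forall>i a. 1 \<le> i \<and> i < j \<longrightarrow> psi_defined G (Suc k) (j - 1) (z i a)"
      using P(6) Z j by auto
    have d2: "\<forall>i a. Suc j < i \<and> i \<le> Suc (Suc k) \<longrightarrow> psi_defined G (Suc k) j (z i a)"
      using P(6) Z j by auto
    have cells: "shell_psi G (Suc (Suc k)) j z i a \<in> cell G (Suc k)"
      if i: "1 \<le> i" "i \<le> Suc (Suc k)" for i a
    proof -
      consider "i < j" | "i = j" | "i = Suc j" | "Suc j < i" by linarith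
      then show ?thesis
      proof cases
        case 1 then show ?thesis unfolding shell_psi_def using P(7) Z i j by simp
      next
        case 2 then show ?thesis unfolding shell_psi_def using A(4)[OF c1] A(4)[OF c2] by simp
      next
        case 3
        have "face G (Suc k) j a (z (Suc j) a) \<in> cell G k" using A(1) Z j by simp
        then show ?thesis unfolding shell_psi_def using 3 A(2) j by simp
      next
        case 4 then show ?thesis unfolding shell_psi_def using P(7) Z i j by simp
      qed
    qed
    have "is_shell G (Suc (Suc k)) (shell_psi G (Suc (Suc k)) j z)"
      unfolding is_shell_def using cells shell_compat[OF C j Z S] by simp
    then show ?thesis using c1 c2 d1 d2 by blast
  qed
  have part2: "psi_defined G (Suc (Suc k)) j x \<and>
            (\<forall>i a. 1 \<le> i \<and> i \<le> Suc (Suc k) \<longrightarrow>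
               shell_psi G (Suc (Suc k)) j (bdry G (Suc (Suc k)) x) i a = face G (Suc (Suc k)) i a (psi G (Suc (Suc k)) j x))"
    if x: "x \<in> cell G (Suc (Suc k))" for x
  proof (intro conjI allI impI)
    show "psi_defined G (Suc (Suc k)) j x" using P(6) x j by simp
    fix i a assume i: "1 \<le> i \<and> i \<le> Suc (Suc k)"
    consider "i < j" | "i = j" | "i = Suc j" | "Suc j < i" by linarith
    then show "shell_psi G (Suc (Suc k)) j (bdry G (Suc (Suc k)) x) i a = face G (Suc (Suc k)) i a (psi G (Suc (Suc k)) j x)"
    proof cases
      case 1 then show ?thesis unfolding shell_psi_def bdry_def using P(1)[OF x, of j i a] i j by simp
    next
      case 2 then show ?thesis unfolding shell_psi_def bdry_def using P(4)[OF x, of j] P(5)[OF x, of j] i j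
        by (cases a) simp_all
    next
      case 3 then show ?thesis unfolding shell_psi_def bdry_def using P(3)[OF x, of j a] i j by simp
    next
      case 4 then show ?thesis unfolding shell_psi_def bdry_def using P(2)[OF x, of j i a] i j by simp
    qed
  qed
  show ?thesis using part1 part2 unfolding n by simp
qed

end
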